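(* Let $n,m\ge 1$ and let $u_1,\ldots,u_r$ be left normed commutators $u_j=[t_1,t_2,t_{j_3},\ldots,t_{j_k}]$ ($j_s\in\{1,2\}$) with $\deg_{t_1}u_j=n$ and $\deg_{t_2}u_j=m$ for all $j$. Let $\alpha_1,\ldots,\alpha_r\in K[X]$ and suppose $f(C_1,C_2)=\sum_j\alpha_ju_j(C_1,C_2)\in F$. Then the following are equivalent: (1) $f(C_1,C_2)$ is strongly central in $F$; (2) $f(C_1,C_2)$ is central in $F$; (3) $\alpha_1+\cdots+\alpha_r=0$ in $K[X;Y]$.
   Context: $K$ is an infinite field of characteristic different from 2. Let $X=\{x_1,x_2,x_1',x_2'\}$ and $Y=\{y_1,y_2,y_1',y_2'\}$, and let $K[X;Y]\cong K[X]\otimes_K E(Y)$ be the free supercommutative algebra: the $x$'s are even commuting variables, the $y$'s are odd pairwise anticommuting variables, and $E(Y)$ is the Grassmann algebra on the vector space with basis $Y$; $K[X]$ is the polynomial subalgebra, whose elements act on matrices as scalars. Put $C_1=\begin{pmatrix} x_1&y_1\\ y_1'&x_1'\end{pmatrix}$, $C_2=\begin{pmatrix} x_2&y_2\\ y_2'&x_2'\end{pmatrix}$, and let $F=K[C_1,C_2]$ be the unital $K$-subalgebra of $M_2(K[X;Y])$ generated by $C_1,C_2$. Commutators are $[a,b]=ab-ba$, left normed: $[a_1,\ldots,a_k]=[[a_1,\ldots,a_{k-1}],a_k]$; $t_1,t_2$ are free noncommuting variables. An element $a\in F$ is strongly central if $a$ is central in $F$ and $ab$ is central in $F$ for every $b\in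 F$. *)

theory Defs
  imports "HOL-Computational_Algebra.Polynomial"
begin

text \<open>K[X] = K[x1,x2,x1',x2'] as nested univariate polynomials:
  x1 is the outermost variable, then x2, x1', x2'.\<close>
type_synonym 'k kx = "'k poly poly poly poly"

definition vx1 :: "'k::field kx" where "vx1 = monom 1 1"
definition vx2 :: "'k::field kx" where "vx2 = [:monom 1 1:]"
definition vx1' :: "'k::field kx" where "vx1' = [:[:monom 1 1:]:]"
definition vx2' :: "'k::field kx" where "vx2' = [:[:[:monom 1 1:]:]:]"

definition constK :: "'k::field \<Rightarrow> 'k kx" where "constK c = [:[:[:[:c:]:]:]:]"

text \<open>K[X;Y] = K[X] \<otimes> E(Y): an element is the family of coefficients (in K[X]) of the
  Grassmann monomials y_S, S a set of odd-variable indices (y1=0, y2=1, y1'=2, y2'=3),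
  y_S being the product of the y_i, i in S, in increasing order.\<close>
type_synonym 'k sc = "nat set \<Rightarrow> 'k kx"

definition gsign :: "nat set \<Rightarrow> nat set \<Rightarrow> 'k::field kx" where
  "gsign A B = (-1) ^ card {(i, j). i \<in> A \<and> j \<in> B \<and> j < i}"

definition gmul :: "'k::field sc \<Rightarrow> 'k sc \<Rightarrow> 'k sc" where
  "gmul a b = (\<lambda>S. \<Sum>T\<in>Pow S. gsign T (S - T) * a T * b (S - T))"

definition gadd :: "'k::field sc \<Rightarrow> 'k sc \<Rightarrow> 'k sc" where
  "gadd a b = (\<lambda>S. a S + b S)"

definition gsub :: "'k::field sc \<Rightarrow> 'k sc \<Rightarrow> 'k sc" where
  "gsub a b = (\<lambda>S. a S - b S)"

definition gzero :: "'k::field sc" where "gzero = (\<lambda>S. 0)"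

definition gev :: "'k::field kx \<Rightarrow> 'k sc" where
  "gev r = (\<lambda>S. if S = {} then r else 0)"

definition gone :: "'k::field sc" where "gone = gev 1"

definition gy :: "nat \<Rightarrow> 'k::field sc" where
  "gy i = (\<lambda>S. if S = {i} then 1 else 0)"

datatype 'a mat2 = M2 'a 'a 'a 'a

fun mmul :: "'k::field sc mat2 \<Rightarrow> 'k sc mat2 \<Rightarrow> 'k sc mat2" where
  "mmul (M2 a b c d) (M2 e f g h) =
     M2 (gadd (gmul a e) (gmul b g)) (gadd (gmul a f) (gmul b h))
        (gadd (gmul c e) (gmul d g)) (gadd (gmul c f) (gmul d h))"

fun madd :: "'k::field sc mat2 \<Rightarrow> 'k sc mat2 \<Rightarrow> 'k sc mat2" where
  "madd (M2 a b c d) (M2 e f g h) = M2 (gadd a e) (gadd b f) (gadd c g) (gadd d h)"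

fun msub :: "'k::field sc mat2 \<Rightarrow> 'k sc mat2 \<Rightarrow> 'k sc mat2" where
  "msub (M2 a b c d) (M2 e f g h) = M2 (gsub a e) (gsub b f) (gsub c g) (gsub d h)"

fun mscal :: "'k::field sc \<Rightarrow> 'k sc mat2 \<Rightarrow> 'k sc mat2" where
  "mscal s (M2 a b c d) = M2 (gmul s a) (gmul s b) (gmul s c) (gmul s d)"

definition mzero :: "'k::field sc mat2" where "mzero = M2 gzero gzero gzero gzero"
definition mone :: "'k::field sc mat2" where "mone = M2 gone gzero gzero gone"

definition mcomm :: "'k::field sc mat2 \<Rightarrow> 'k sc mat2 \<Rightarrow> 'k sc mat2" where
  "mcomm a b = msub (mmul a b) (mmul b a)"

definition C1 :: "'k::field sc mat2" where
  "C1 = M2 (gev vx1) (gy 0) (gy 2) (gev vx1')"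
definition C2 :: "'k::field sc mat2" where
  "C2 = M2 (gev vx2) (gy 1) (gy 3) (gev vx2')"

inductive_set Falg :: "'k::field sc mat2 set" where
  one: "mone \<in> Falg"
| gen1: "C1 \<in> Falg"
| gen2: "C2 \<in> Falg"
| add: "a \<in> Falg \<Longrightarrow> b \<in> Falg \<Longrightarrow> madd a b \<in> Falg"
| mul: "a \<in> Falg \<Longrightarrow> b \<in> Falg \<Longrightarrow> mmul a b \<in> Falg"
| smul: "a \<in> Falg \<Longrightarrow> mscal (gev (constK c)) a \<in> Falg"

definition central_in_F :: "'k::field sc mat2 \<Rightarrow> bool" where
  "central_in_F a \<longleftrightarrow> a \<in> Falg \<and> (\<forall>b\<in>Falg. mmul a b = mmul b a)"

definition strongly_central :: "'k::field sc mat2 \<Rightarrow> bool" where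
  "strongly_central a \<longleftrightarrow> central_in_F a \<and> (\<forall>b\<in>Falg. central_in_F (mmul a b))"

definition Cgen :: "nat \<Rightarrow> 'k::field sc mat2" where
  "Cgen j = (if j = 1 then C1 else C2)"

text \<open>the left normed commutator [t1,t2,t_{j3},...,t_{jk}] evaluated at (C1,C2),
  where js = [j3,...,jk]\<close>
definition lcomm :: "nat list \<Rightarrow> 'k::field sc mat2" where
  "lcomm js = foldl (\<lambda>acc j. mcomm acc (Cgen j)) (mcomm C1 C2) js"

fun fcomb :: "nat \<Rightarrow> (nat \<Rightarrow> 'k::field kx) \<Rightarrow> (nat \<Rightarrow> nat list) \<Rightarrow> 'k sc mat2" where
  "fcomb 0 alpha js = mzero"
| "fcomb (Suc k) alpha js = madd (fcomb k alpha js) (mscal (gev (alpha k)) (lcomm (js k)))"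

end

theory Submission
  imports Defs
begin


definition inv :: "nat set \<Rightarrow> nat set \<Rightarrow> nat" where
  "inv A B = card {(i, j). i \<in> A \<and> j \<in> B \<and> j < i}"

lemma gsign_inv: "gsign A B = (-1) ^ inv A B"
  by (simp add: gsign_def inv_def)

lemma inv_Un_left:
  assumes "finite A" "finite B" "finite C" "A \<inter> B = {}"
  shows "inv (A \<union> B) C = inv A C + inv B C"
proof -
  have "{(i, j). i \<in> A \<union> B \<and> j \<in> C \<and> j < i} =
        {(i, j). i \<in> A \<and> j \<in> C \<and> j < i} \<union> {(i, j). i \<in> B \<and> j \<in> C \<and> j < i}" by auto
  moreover have "finite {(i, j). i \<in> A \<and> j \<in> C \<and> j < i}"
    by (rule finite_subset[of _ "A \<times> C"]) (use assms in auto)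
  moreover have "finite {(i, j). i \<in> B \<and> j \<in> C \<and> j < i}"
    by (rule finite_subset[of _ "B \<times> C"]) (use assms in auto)
  ultimately show ?thesis unfolding inv_def
    by (subst card_Un_disjoint[symmetric]) (use assms in auto)
qed

lemma inv_Un_right:
  assumes "finite A" "finite B" "finite C" "B \<inter> C = {}"
  shows "inv A (B \<union> C) = inv A B + inv A C"
proof -
  have "{(i, j). i \<in> A \<and> j \<in> B \<union> C \<and> j < i} =
        {(i, j). i \<in> A \<and> j \<in> B \<and> j < i} \<union> {(i, j). i \<in> A \<and> j \<in> C \<and> j < i}" by auto
  moreover have "finite {(i, j). i \<in> A \<and> j \<in> B \<and> j < i}"
    by (rule finite_subset[of _ "A \<times> B"]) (use assms in auto)
  moreover have "finite {(i, j). i \<in> A \<and> j \<in> C \<and> j < i}"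
    by (rule finite_subset[of _ "A \<times> C"]) (use assms in auto)
  ultimately show ?thesis unfolding inv_def
    by (subst card_Un_disjoint[symmetric]) (use assms in auto)
qed

lemma gsign_Un_left:
  "finite A \<Longrightarrow> finite B \<Longrightarrow> finite C \<Longrightarrow> A \<inter> B = {} \<Longrightarrow>
   gsign (A \<union> B) C = (gsign A C * gsign B C :: 'k::field kx)"
  by (simp add: gsign_inv inv_Un_left power_add)

lemma gsign_Un_right:
  "finite A \<Longrightarrow> finite B \<Longrightarrow> finite C \<Longrightarrow> B \<inter> C = {} \<Longrightarrow>
   gsign A (B \<union> C) = (gsign A B * gsign A C :: 'k::field kx)"
  by (simp add: gsign_inv inv_Un_right power_add)

lemma gmul_assoc: "gmul (gmul a b) c = gmul a (gmul (b::'k::field sc) c)"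
proof
  fix S :: "nat set"
  show "gmul (gmul a b) c S = gmul a (gmul b c) S"
  proof (cases "finite S")
    case False
    then show ?thesis by (simp add: gmul_def)
  next
    case fin: True
    have L: "gmul (gmul a b) c S = (\<Sum>(T,U)\<in>Sigma (Pow S) Pow.
        gsign T (S - T) * (gsign U (T - U) * a U * b (T - U)) * c (S - T))"
      unfolding gmul_def
      by (subst sum.Sigma[symmetric]) (auto simp: sum_distrib_left sum_distrib_right fin intro: finite_subset)
    have R: "gmul a (gmul b c) S = (\<Sum>(U,V)\<in>Sigma (Pow S) (\<lambda>U. Pow (S - U)).
        gsign U (S - U) * a U * (gsign V (S - U - V) * b V * c (S - U - V)))"
      unfolding gmul_def
      by (subst sum.Sigma[symmetric]) (auto simp: sum_distrib_left sum_distrib_right fin intro: finite_subset)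
    have "(\<Sum>(T,U)\<in>Sigma (Pow S) Pow.
        gsign T (S - T) * (gsign U (T - U) * a U * b (T - U)) * c (S - T)) =
        (\<Sum>(U,V)\<in>Sigma (Pow S) (\<lambda>U. Pow (S - U)).
        gsign U (S - U) * a U * (gsign V (S - U - V) * b V * c (S - U - V)))"
    proof (rule sum.reindex_bij_witness[where i = "\<lambda>(U,V). (U \<union> V, U)" and j = "\<lambda>(T,U). (U, T - U)"])
      fix p assume "p \<in> Sigma (Pow S) Pow"
      then obtain T U where p0: "p = (T, U)" "T \<subseteq> S" "U \<subseteq> T" by auto
      define V where "V = T - U"
      have p: "U \<subseteq> S" "V \<subseteq> S - U" "T = U \<union> V" using p0 by (auto simp: V_def)
      have fU: "finite U" "finite V" "finite (S - U - V)" using p(1,2) fin by (auto intro: finite_subset)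
      have e1: "S - (U \<union> V) = S - U - V" by auto
      have e3: "S - U = V \<union> (S - U - V)" using p(1,2) by auto
      have s1: "gsign (U \<union> V) (S - U - V) = (gsign U (S - U - V) * gsign V (S - U - V) :: 'k kx)"
        using fU p(1,2) by (intro gsign_Un_left) auto
      have s2: "gsign U (S - U) = (gsign U V * gsign U (S - U - V) :: 'k kx)"
        using fU p(1,2) by (subst e3, intro gsign_Un_right) auto
      show "(case (case p of (T, U) \<Rightarrow> (U, T - U)) of (U, V) \<Rightarrow>
          gsign U (S - U) * a U * (gsign V (S - U - V) * b V * c (S - U - V))) =
         (case p of (T, U) \<Rightarrow> gsign T (S - T) * (gsign U (T - U) * a U * b (T - U)) * c (S - T))"
      proof -
        have "T - U = V" by (simp add: V_def)
        then have "(case p of (T, U) \<Rightarrow> gsign T (S - T) * (gsign U (T - U) * a U * b (T - U)) * c (S - T))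
           = gsign (U \<union> V) (S - U - V) * (gsign U V * a U * b V) * c (S - U - V)"
          using p0 p(3) e1 by simp
        also have "\<dots> = gsign U (S - U) * a U * (gsign V (S - U - V) * b V * c (S - U - V))"
          unfolding s1 s2 by (simp only: mult_ac)
        finally have X: "(case p of (T, U) \<Rightarrow> gsign T (S - T) * (gsign U (T - U) * a U * b (T - U)) * c (S - T))
           = gsign U (S - U) * a U * (gsign V (S - U - V) * b V * c (S - U - V))" .
        have Y: "(case (case p of (T, U) \<Rightarrow> (U, T - U)) of (U, V) \<Rightarrow>
          gsign U (S - U) * a U * (gsign V (S - U - V) * b V * c (S - U - V)))
          = gsign U (S - U) * a U * (gsign V (S - U - V) * b V * c (S - U - V))"
          using p0 \<open>T - U = V\<close> by simp
        show ?thesis unfolding Y X ..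
      qed
    qed auto
    then show ?thesis using L R by simp
  qed
qed

lemma gsign_empty[simp]: "gsign {} S = 1" "gsign S {} = 1"
  by (simp_all add: gsign_def)

lemma gmul_infinite: "infinite S \<Longrightarrow> gmul a b S = 0"
  by (simp add: gmul_def)

lemma gmul_gadd_left: "gmul (gadd a b) c = gadd (gmul a c) (gmul b c)"
  by (rule ext) (simp add: gmul_def gadd_def algebra_simps sum.distrib)

lemma gmul_gadd_right: "gmul a (gadd b c) = gadd (gmul a b) (gmul a c)"
  by (rule ext) (simp add: gmul_def gadd_def algebra_simps sum.distrib)

lemma gmul_gev_left: "finite S \<Longrightarrow> gmul (gev r) a S = r * a S"
proof -
  assume fin: "finite S"
  have "gmul (gev r) a S = (\<Sum>T\<in>Pow S. if T = {} then r * a S else 0)"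
    unfolding gmul_def gev_def by (rule sum.cong) auto
  also have "\<dots> = r * a S" using fin by (simp add: sum.delta)
  finally show ?thesis .
qed

lemma gmul_gev_right: "finite S \<Longrightarrow> gmul a (gev r) S = a S * r"
proof -
  assume fin: "finite S"
  have "gmul a (gev r) S = (\<Sum>T\<in>Pow S. if T = S then a S * r else 0)"
    unfolding gmul_def gev_def by (rule sum.cong) auto
  also have "\<dots> = a S * r" using fin by (simp add: sum.delta)
  finally show ?thesis .
qed

lemma gmul_one_left: "\<forall>S. infinite S \<longrightarrow> a S = 0 \<Longrightarrow> gmul gone a = a"
  by (rule ext, case_tac "finite x") (auto simp: gone_def gmul_gev_left gmul_infinite)

lemma gmul_one_right: "\<forall>S. infinite S \<longrightarrow> a S = 0 \<Longrightarrow> gmul a gone = a"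
  by (rule ext, case_tac "finite x") (auto simp: gone_def gmul_gev_right gmul_infinite)

typedef (overloaded) 'k G = "{a :: 'k::field sc. \<forall>S. infinite S \<longrightarrow> a S = 0}"
  morphisms rep abs by (rule exI[of _ "\<lambda>S. 0"]) auto

setup_lifting type_definition_G

instantiation G :: (field) ring_1
begin
lift_definition zero_G :: "'a G" is gzero by (simp add: gzero_def)
lift_definition one_G :: "'a G" is gone by (auto simp: gone_def gev_def)
lift_definition plus_G :: "'a G \<Rightarrow> 'a G \<Rightarrow> 'a G" is gadd by (simp add: gadd_def)
lift_definition minus_G :: "'a G \<Rightarrow> 'a G \<Rightarrow> 'a G" is gsub by (simp add: gsub_def)
lift_definition uminus_G :: "'a G \<Rightarrow> 'a G" is "\<lambda>a S. - a S" by simp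
lift_definition times_G :: "'a G \<Rightarrow> 'a G \<Rightarrow> 'a G" is gmul by (simp add: gmul_infinite)
instance
proof
  fix a b c :: "'a G"
  show "a * b * c = a * (b * c)" by transfer (rule gmul_assoc)
  show "(a + b) * c = a * c + b * c" by transfer (rule gmul_gadd_left)
  show "a * (b + c) = a * b + a * c" by transfer (rule gmul_gadd_right)
  show "a + b + c = a + (b + c)" by transfer (simp add: gadd_def add.assoc)
  show "a + b = b + a" by transfer (simp add: gadd_def add.commute)
  show "0 + a = a" by transfer (simp add: gadd_def gzero_def)
  show "- a + a = 0" by transfer (simp add: gadd_def gzero_def)
  show "a - b = a + - b" by transfer (simp add: gadd_def gsub_def)
  show "1 * a = a" by transfer (rule gmul_one_left)
  show "a * 1 = a" by transfer (rule gmul_one_right)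
  show "(0::'a G) \<noteq> 1" by transfer (auto simp: gone_def gev_def gzero_def fun_eq_iff)
qed
end


lift_definition X :: "'k::field kx \<Rightarrow> 'k G" is gev by (auto simp: gev_def)
lift_definition Y :: "nat \<Rightarrow> 'k::field G" is gy by (auto simp: gy_def)

lemma gev_mul: "gmul (gev p) (gev q) = gev (p * q)"
proof (rule ext)
  fix S show "gmul (gev p) (gev q) S = gev (p * q) S"
  proof (cases "finite S")
    case True then show ?thesis by (simp add: gmul_gev_left) (simp add: gev_def)
  next
    case False then show ?thesis by (auto simp: gmul_infinite gev_def)
  qed
qed

lemma X_add: "X (p + q) = X p + X q" by transfer (rule ext, simp add: gev_def gadd_def)
lemma X_mult: "X (p * q) = X p * X q" by transfer (simp add: gev_mul)
lemma X_one: "X 1 = 1" by transfer (simp add: gone_def)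
lemma X_zero: "X 0 = 0" by transfer (auto simp: gev_def gzero_def)
lemma X_uminus: "X (- p) = - X p" by transfer (rule ext, simp add: gev_def)
lemma X_diff: "X (p - q) = X p - X q" by transfer (rule ext, simp add: gev_def gsub_def)

lemma gev_comm: "\<forall>S. infinite S \<longrightarrow> a S = 0 \<Longrightarrow> gmul (gev p) a = gmul a (gev p)"
proof (rule ext)
  fix S assume a: "\<forall>S. infinite S \<longrightarrow> a S = 0"
  show "gmul (gev p) a S = gmul a (gev p) S"
  proof (cases "finite S")
    case True then show ?thesis by (simp add: gmul_gev_left gmul_gev_right mult.commute)
  next
    case False then show ?thesis by (auto simp: gmul_infinite)
  qed
qed

lemma X_comm: "X p * a = a * X p"
  by transfer (rule gev_comm)

lemma gmul_gy: "gmul (gy i) (gy j) =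
   (\<lambda>S. if i \<noteq> j \<and> S = {i, j} then (if j < i then -1 else 1) else (0::'k::field kx))"
proof (rule ext)
  fix S
  show "gmul (gy i) (gy j) S = (if i \<noteq> j \<and> S = {i, j} then (if j < i then -1 else 1) else (0::'k kx))"
  proof (cases "finite S")
    case False
    then show ?thesis by (auto simp: gmul_infinite)
  next
    case True
    have "(gmul (gy i) (gy j) :: 'k sc) S = (\<Sum>T\<in>Pow S. if T = {i} then gsign {i} (S - {i}) * gy j (S - {i}) else 0)"
      unfolding gmul_def gy_def by (rule sum.cong) auto
    also have "\<dots> = (if i \<in> S then gsign {i} (S - {i}) * gy j (S - {i}) else 0)"
      using True by (simp add: sum.delta)
    also have "\<dots> = (if i \<noteq> j \<and> S = {i, j} then gsign {i} {j} else 0)"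
      by (auto simp: gy_def)
    finally have 1: "(gmul (gy i) (gy j) :: 'k sc) S = (if i \<noteq> j \<and> S = {i, j} then gsign {i} {j} else 0)" .
    have se: "{(a, b). a \<in> {i} \<and> b \<in> {j} \<and> b < a} = (if j < i then {(i, j)} else {})" by auto
    have g: "gsign {i} {j} = (if j < i then -1 else (1::'k kx))"
      unfolding gsign_def se by simp
    show ?thesis by (simp only: 1 g)
  qed
qed

lemma Y_anti: "Y i * Y j = - (Y j * Y i)"
  by transfer (rule ext, auto simp: gmul_gy insert_commute)

lemma Y_sq: "Y i * Y i = 0"
  by transfer (rule ext, simp add: gmul_gy gzero_def)

lemma gmul_gev_gy: "gmul (gev c) (gy i) = (\<lambda>S. if S = {i} then c else 0)"
proof (rule ext)
  fix S show "gmul (gev c) (gy i) S = (if S = {i} then c else 0)"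
  proof (cases "finite S")
    case True then show ?thesis by (simp add: gmul_gev_left gy_def)
  next
    case False then show ?thesis by (auto simp: gmul_infinite)
  qed
qed

lemma rep_XY: "rep (X c * Y i) = (\<lambda>S. if S = {i} then c else 0)"
  by transfer (rule gmul_gev_gy)


instantiation mat2 :: (ring_1) ring_1
begin
definition "zero_mat2 = M2 0 0 0 0"
definition "one_mat2 = M2 1 0 0 1"
definition "plus_mat2 A B = (case A of M2 a b c d \<Rightarrow> case B of M2 e f g h \<Rightarrow> M2 (a + e) (b + f) (c + g) (d + h))"
definition "minus_mat2 A B = (case A of M2 a b c d \<Rightarrow> case B of M2 e f g h \<Rightarrow> M2 (a - e) (b - f) (c - g) (d - h))"
definition "uminus_mat2 A = (case A of M2 a b c d \<Rightarrow> M2 (- a) (- b) (- c) (- d))"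
definition "times_mat2 A B = (case A of M2 a b c d \<Rightarrow> case B of M2 e f g h \<Rightarrow>
   M2 (a * e + b * g) (a * f + b * h) (c * e + d * g) (c * f + d * h))"
instance
proof
  fix A B C :: "'a mat2"
  show "A * B * C = A * (B * C)"
    by (cases A; cases B; cases C) (simp add: times_mat2_def algebra_simps)
  show "(A + B) * C = A * C + B * C"
    by (cases A; cases B; cases C) (simp add: times_mat2_def plus_mat2_def algebra_simps)
  show "A * (B + C) = A * B + A * C"
    by (cases A; cases B; cases C) (simp add: times_mat2_def plus_mat2_def algebra_simps)
  show "A + B + C = A + (B + C)"
    by (cases A; cases B; cases C) (simp add: plus_mat2_def algebra_simps)
  show "A + B = B + A"
    by (cases A; cases B) (simp add: plus_mat2_def algebra_simps)
  show "0 + A = A" by (cases A) (simp add: plus_mat2_def zero_mat2_def)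
  show "- A + A = 0" by (cases A) (simp add: plus_mat2_def zero_mat2_def uminus_mat2_def)
  show "A - B = A + - B" by (cases A; cases B) (simp add: plus_mat2_def minus_mat2_def uminus_mat2_def)
  show "1 * A = A" by (cases A) (simp add: times_mat2_def one_mat2_def)
  show "A * 1 = A" by (cases A) (simp add: times_mat2_def one_mat2_def)
  show "(0::'a mat2) \<noteq> 1" by (simp add: zero_mat2_def one_mat2_def)
qed
end

lemma mat2_ops[simp]:
  "M2 a b c d + M2 e f g h = M2 (a + e) (b + f) (c + g) (d + h)"
  "M2 a b c d - M2 e f g h = M2 (a - e) (b - f) (c - g) (d - h)"
  "- M2 a b c d = M2 (- a) (- b) (- c) (- d)"
  "M2 a b c d * M2 e f g h = M2 (a * e + b * g) (a * f + b * h) (c * e + d * g) (c * f + d * h)"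
  by (simp_all add: plus_mat2_def minus_mat2_def uminus_mat2_def times_mat2_def)

abbreviation mapR :: "'k::field G mat2 \<Rightarrow> 'k sc mat2" where "mapR \<equiv> map_mat2 rep"

lemma mapR_inj: "mapR A = mapR B \<Longrightarrow> A = B"
  by (cases A; cases B) (simp add: rep_inject)

lemma mapR_mul: "mmul (mapR A) (mapR B) = mapR (A * B)"
  by (cases A; cases B) (simp add: times_G.rep_eq plus_G.rep_eq)
lemma mapR_add: "madd (mapR A) (mapR B) = mapR (A + B)"
  by (cases A; cases B) (simp add: plus_G.rep_eq)
lemma mapR_sub: "msub (mapR A) (mapR B) = mapR (A - B)"
  by (cases A; cases B) (simp add: minus_G.rep_eq)
lemma mapR_zero: "mzero = mapR 0"
  by (simp add: mzero_def zero_mat2_def zero_G.rep_eq)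
lemma mapR_one: "mone = mapR 1"
  by (simp add: mone_def one_mat2_def zero_G.rep_eq one_G.rep_eq)

definition smat :: "'a::ring_1 \<Rightarrow> 'a mat2" where "smat x = M2 x 0 0 x"

lemma mapR_scal: "mscal (rep x) (mapR A) = mapR (smat x * A)"
  by (cases A) (simp add: smat_def times_G.rep_eq)

definition C1G :: "'k::field G mat2" where "C1G = M2 (X vx1) (Y 0) (Y 2) (X vx1')"
definition C2G :: "'k::field G mat2" where "C2G = M2 (X vx2) (Y 1) (Y 3) (X vx2')"

lemma mapR_C1: "C1 = mapR C1G" by (simp add: C1_def C1G_def X.rep_eq Y.rep_eq)
lemma mapR_C2: "C2 = mapR C2G" by (simp add: C2_def C2G_def X.rep_eq Y.rep_eq)

inductive_set FF :: "'k::field G mat2 set" where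
  one: "1 \<in> FF"
| gen1: "C1G \<in> FF"
| gen2: "C2G \<in> FF"
| add: "a \<in> FF \<Longrightarrow> b \<in> FF \<Longrightarrow> a + b \<in> FF"
| mul: "a \<in> FF \<Longrightarrow> b \<in> FF \<Longrightarrow> a * b \<in> FF"
| smul: "a \<in> FF \<Longrightarrow> smat (X (constK c)) * a \<in> FF"

lemma Falg_FF1: "a \<in> Falg \<Longrightarrow> \<exists>b\<in>FF. a = mapR b"
proof (induction rule: Falg.induct)
  case one then show ?case using FF.one mapR_one by blast
next
  case gen1 then show ?case using FF.gen1 mapR_C1 by blast
next
  case gen2 then show ?case using FF.gen2 mapR_C2 by blast
next
  case (add a b) then show ?case using FF.add mapR_add by metis
next
  case (mul a b) then show ?case using FF.mul mapR_mul by metis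
next
  case (smul a c) then show ?case using FF.smul mapR_scal X.rep_eq by metis
qed

lemma Falg_FF2: "b \<in> FF \<Longrightarrow> mapR b \<in> Falg"
proof (induction rule: FF.induct)
  case one then show ?case using Falg.one mapR_one by metis
next
  case gen1 then show ?case using Falg.gen1 mapR_C1 by metis
next
  case gen2 then show ?case using Falg.gen2 mapR_C2 by metis
next
  case (add a b) then show ?case using Falg.add mapR_add by metis
next
  case (mul a b) then show ?case using Falg.mul mapR_mul by metis
next
  case (smul a c) then show ?case using Falg.smul mapR_scal X.rep_eq by metis
qed

lemma Falg_iff: "mapR b \<in> Falg \<longleftrightarrow> b \<in> FF"
  using Falg_FF1 Falg_FF2 mapR_inj by metis

definition centralG :: "'k::field G mat2 \<Rightarrow> bool" where
  "centralG a \<longleftrightarrow> a \<in> FF \<and> (\<forall>b\<in>FF. a * b = b * a)"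

lemma central_iff: "central_in_F (mapR a) \<longleftrightarrow> centralG a"
  unfolding central_in_F_def centralG_def Falg_iff
  by (metis Falg_FF1 Falg_FF2 mapR_inj mapR_mul)

lemma strongly_iff: "strongly_central (mapR a) \<longleftrightarrow> centralG a \<and> (\<forall>b\<in>FF. centralG (a * b))"
  unfolding strongly_central_def central_iff
  by (metis Falg_FF1 Falg_FF2 central_iff mapR_mul)




definition d1 :: "'k::field kx" where "d1 = vx1 - vx1'"
definition d2 :: "'k::field kx" where "d2 = vx2 - vx2'"
definition a0 :: "'k::field G" where "a0 = X d1 * Y 1 - X d2 * Y 0"
definition b0 :: "'k::field G" where "b0 = X d2 * Y 2 - X d1 * Y 3"
definition s0 :: "'k::field G" where "s0 = Y 0 * Y 3 + Y 2 * Y 1"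

lemma YX: "Y i * X p = X p * Y i" by (rule X_comm[symmetric])
lemma YX2: "Y i * (X p * t) = X p * (Y i * t)" by (simp add: mult.assoc[symmetric] YX)
lemma XX: "X p * X q = X (p * q)" by (simp add: X_mult)
lemma XX2: "X p * (X q * t) = X (p * q) * t" by (simp add: X_mult mult.assoc)
lemma Y_swap: "j < i \<Longrightarrow> Y i * Y j = - (Y j * Y i)" by (rule Y_anti)
lemma Y_swap2: "j < i \<Longrightarrow> Y i * (Y j * t) = - (Y j * (Y i * t))"
  by (simp add: mult.assoc[symmetric] Y_swap)
lemma Y_sq2: "Y i * (Y i * t) = 0" by (simp add: mult.assoc[symmetric] Y_sq)

lemmas nf = algebra_simps YX YX2 XX XX2 Y_swap Y_swap2 Y_sq Y_sq2

lemma a0b0s0: "a0 * b0 * s0 = 0"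
  unfolding a0_def b0_def s0_def by (simp add: nf mult_ac)


definition Od :: "'k::field G \<Rightarrow> bool" where "Od a \<longleftrightarrow> (\<forall>k. a * Y k = - (Y k * a))"
definition Ev :: "'k::field G \<Rightarrow> bool" where "Ev a \<longleftrightarrow> (\<forall>k. a * Y k = Y k * a)"

lemma Od_Y: "Od (Y i)" unfolding Od_def by (rule allI, rule Y_anti)
lemma Od_add: "Od a \<Longrightarrow> Od b \<Longrightarrow> Od (a + b)" by (simp add: Od_def algebra_simps)
lemma Od_diff: "Od a \<Longrightarrow> Od b \<Longrightarrow> Od (a - b)" by (simp add: Od_def algebra_simps)
lemma Od_assoc: "Od a \<Longrightarrow> a * (Y k * t) = - (Y k * (a * t))"
  unfolding Od_def by (simp add: mult.assoc[symmetric])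
lemma Ev_assoc: "Ev a \<Longrightarrow> a * (Y k * t) = Y k * (a * t)"
  unfolding Ev_def by (simp add: mult.assoc[symmetric])
lemma Od_X: "Od a \<Longrightarrow> Od (X c * a)"
  unfolding Od_def by (simp add: mult.assoc YX2)
lemma Ev_X: "Ev a \<Longrightarrow> Ev (X c * a)"
  unfolding Ev_def by (simp add: mult.assoc YX2)
lemma Ev_add: "Ev a \<Longrightarrow> Ev b \<Longrightarrow> Ev (a + b)" by (simp add: Ev_def algebra_simps)
lemma Ev_diff: "Ev a \<Longrightarrow> Ev b \<Longrightarrow> Ev (a - b)" by (simp add: Ev_def algebra_simps)
lemma Ev_uminus: "Ev a \<Longrightarrow> Ev (- a)" by (simp add: Ev_def algebra_simps)
lemma Ev_zero: "Ev 0" by (simp add: Ev_def)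
lemma Ev_OO: "Od a \<Longrightarrow> Od b \<Longrightarrow> Ev (a * b)"
proof -
  assume a: "Od a" and b: "Od b"
  show ?thesis unfolding Ev_def
  proof
    fix k
    have "a * b * Y k = a * (b * Y k)" by (simp add: mult.assoc)
    also have "\<dots> = - (a * (Y k * b))" using b by (simp add: Od_def)
    also have "\<dots> = Y k * (a * b)" using Od_assoc[OF a] by simp
    finally show "a * b * Y k = Y k * (a * b)" by (simp add: mult.assoc)
  qed
qed
lemma Od_EO: "Ev z \<Longrightarrow> Od a \<Longrightarrow> Od (z * a)"
proof -
  assume z: "Ev z" and a: "Od a"
  show ?thesis unfolding Od_def
  proof
    fix k
    have "z * a * Y k = z * (a * Y k)" by (simp add: mult.assoc)
    also have "\<dots> = - (z * (Y k * a))" using a by (simp add: Od_def)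
    also have "\<dots> = - (Y k * (z * a))" using Ev_assoc[OF z] by simp
    finally show "z * a * Y k = - (Y k * (z * a))" .
  qed
qed

lemma Od_a0: "Od a0" unfolding a0_def by (intro Od_diff Od_X Od_Y)
lemma Od_b0: "Od b0" unfolding b0_def by (intro Od_diff Od_X Od_Y)
lemma Ev_s0: "Ev s0" unfolding s0_def by (intro Ev_add Ev_OO Od_Y)

inductive_set Lin :: "'k::field G set" where
  base: "X c * Y i \<in> Lin"
| add: "a \<in> Lin \<Longrightarrow> b \<in> Lin \<Longrightarrow> a + b \<in> Lin"
| diff: "a \<in> Lin \<Longrightarrow> b \<in> Lin \<Longrightarrow> a - b \<in> Lin"

lemma Lin_anti_base: "b \<in> Lin \<Longrightarrow> X c * Y i * b = - (b * (X c * Y i))"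
proof (induction rule: Lin.induct)
  case (base e j)
  show ?case by (simp add: nf mult_ac, subst Y_anti[of i j], simp)
next
  case (add a b) then show ?case by (simp add: algebra_simps)
next
  case (diff a b) then show ?case by (simp add: algebra_simps)
qed

lemma Lin_anti: "a \<in> Lin \<Longrightarrow> b \<in> Lin \<Longrightarrow> a * b = - (b * a)"
proof (induction rule: Lin.induct)
  case (base c i) then show ?case by (rule Lin_anti_base)
next
  case (add a a') then show ?case by (simp add: algebra_simps)
next
  case (diff a a') then show ?case by (simp add: algebra_simps)
qed

lemma Lin_sq: "a \<in> Lin \<Longrightarrow> a * a = 0"
proof (induction rule: Lin.induct)
  case (base c i) then show ?case by (simp add: nf)
next
  case (add a b)
  have "a * b = - (b * a)" using add by (intro Lin_anti)
  then show ?case using add by (simp add: algebra_simps)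
next
  case (diff a b)
  have "a * b = - (b * a)" using diff by (intro Lin_anti)
  then show ?case using diff by (simp add: algebra_simps)
qed

lemma Lin_a0: "a0 \<in> Lin" unfolding a0_def by (intro Lin.diff Lin.base)
lemma Lin_b0: "b0 \<in> Lin" unfolding b0_def by (intro Lin.diff Lin.base)

definition Kl :: "'k::field G \<Rightarrow> bool" where
  "Kl w \<longleftrightarrow> Ev w \<and> w * s0 = 0 \<and> w * a0 = 0 \<and> w * b0 = 0"

lemma Kl_zero: "Kl 0" by (simp add: Kl_def Ev_zero)
lemma Kl_add: "Kl a \<Longrightarrow> Kl b \<Longrightarrow> Kl (a + b)" by (simp add: Kl_def Ev_add algebra_simps)
lemma Kl_diff: "Kl a \<Longrightarrow> Kl b \<Longrightarrow> Kl (a - b)" by (simp add: Kl_def Ev_diff algebra_simps)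
lemma Kl_uminus: "Kl a \<Longrightarrow> Kl (- a)" by (simp add: Kl_def Ev_uminus)
lemma Kl_X: "Kl a \<Longrightarrow> Kl (X c * a)" by (simp add: Kl_def Ev_X mult.assoc)

lemma Kl_a0b0: "Kl (a0 * b0 :: 'k::field G)"
proof -
  have "a0 * b0 * a0 = (0::'k G)"
  proof -
    have aa: "a0 * a0 = (0::'k G)" by (rule Lin_sq[OF Lin_a0])
    have "a0 * a0 * b0 = (0::'k G)" unfolding aa by (rule mult_zero_left)
    then have "a0 * (a0 * b0) = (0::'k G)" by (simp only: mult.assoc)
    moreover have ba: "b0 * a0 = - (a0 * b0 :: 'k G)" by (rule Lin_anti[OF Lin_b0 Lin_a0])
    ultimately show ?thesis by (simp add: mult.assoc)
  qed
  moreover have "a0 * b0 * b0 = (0::'k G)"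
  proof -
    have bb: "b0 * b0 = (0::'k G)" by (rule Lin_sq[OF Lin_b0])
    show ?thesis by (simp add: mult.assoc bb)
  qed
  moreover have "a0 * b0 * s0 = (0::'k G)" by (rule a0b0s0)
  moreover have "Ev (a0 * b0 :: 'k G)" by (rule Ev_OO[OF Od_a0 Od_b0])
  ultimately show ?thesis unfolding Kl_def by blast
qed


definition CG :: "nat \<Rightarrow> 'k::field G mat2" where "CG j = (if j = 1 then C1G else C2G)"

lemma mapR_CG: "Cgen j = mapR (CG j)"
  by (simp add: Cgen_def CG_def mapR_C1 mapR_C2)

definition lc :: "nat list \<Rightarrow> 'k::field G mat2" where
  "lc js = foldl (\<lambda>acc j. acc * CG j - CG j * acc) (C1G * C2G - C2G * C1G) js"

lemma mapR_comm: "mcomm (mapR a) (mapR b) = mapR (a * b - b * a)"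
  by (simp add: mcomm_def mapR_mul mapR_sub)

lemma foldl_mapR: "foldl (\<lambda>acc j. mcomm acc (Cgen j)) (mapR a) js
   = mapR (foldl (\<lambda>acc j. acc * CG j - CG j * acc) a js)"
  by (induction js arbitrary: a) (simp_all add: mapR_CG mapR_comm)

lemma lcomm_eq: "lcomm js = mapR (lc js)"
  unfolding lcomm_def lc_def mapR_C1 mapR_C2 mapR_comm foldl_mapR ..

primrec fc :: "(nat \<Rightarrow> 'k::field kx) \<Rightarrow> (nat \<Rightarrow> nat list) \<Rightarrow> nat \<Rightarrow> 'k G mat2" where
  "fc alpha js 0 = 0"
| "fc alpha js (Suc k) = fc alpha js k + smat (X (alpha k)) * lc (js k)"

lemma mapR_scal': "mscal (gev c) (mapR A) = mapR (smat (X c) * A)"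
  using mapR_scal[of "X c" A] by (simp add: X.rep_eq)

lemma fcomb_eq: "fcomb k alpha js = mapR (fc alpha js k)"
  by (induction k) (simp_all add: mapR_zero lcomm_eq mapR_add mapR_scal')

lemma base_comm: "C1G * C2G - C2G * C1G = M2 s0 a0 b0 s0"
  by (simp add: C1G_def C2G_def s0_def a0_def b0_def d1_def d2_def X_diff nf mult_ac)

lemma step_comm:
  assumes z: "Ev z" and a: "Od a" and b: "Od b"
  shows "M2 z a b z * M2 (X x) (Y i) (Y i') (X x') - M2 (X x) (Y i) (Y i') (X x') * M2 z a b z
    = M2 (a * Y i' + b * Y i) (X (x' - x) * a) (X (x - x') * b) (a * Y i' + b * Y i)"
proof -
  have hz: "\<And>k. z * Y k = Y k * z" using z by (simp add: Ev_def)
  have ha: "\<And>k. Y k * a = - (a * Y k)" using a by (simp add: Od_def)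
  have hb: "\<And>k. Y k * b = - (b * Y k)" using b by (simp add: Od_def)
  have xc: "\<And>p w. w * X p = X p * w" by (simp add: X_comm)
  show ?thesis by (simp add: hz ha hb xc X_diff algebra_simps)
qed

definition P :: "nat list \<Rightarrow> 'k::field kx" where
  "P xs = d1 ^ count_list xs 1 * d2 ^ count_list xs 2"
definition Aa :: "nat list \<Rightarrow> 'k::field G" where
  "Aa xs = X ((-1) ^ length xs * P xs) * a0"
definition Bb :: "nat list \<Rightarrow> 'k::field G" where
  "Bb xs = X (P xs) * b0"
definition yi :: "nat \<Rightarrow> 'k::field G" where "yi j = Y (if j = 1 then 0 else 1)"
definition yp :: "nat \<Rightarrow> 'k::field G" where "yp j = Y (if j = 1 then 2 else 3)"
definition zz :: "nat list \<Rightarrow> 'k::field G" where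
  "zz xs = (if xs = [] then s0 else Aa (butlast xs) * yp (last xs) + Bb (butlast xs) * yi (last xs))"

lemma Od_Aa: "Od (Aa xs)" unfolding Aa_def by (intro Od_X Od_a0)
lemma Od_Bb: "Od (Bb xs)" unfolding Bb_def by (intro Od_X Od_b0)
lemma Ev_zz: "Ev (zz xs)"
  unfolding zz_def yi_def yp_def by (auto intro!: Ev_s0 Ev_add Ev_OO Od_Aa Od_Bb Od_Y)

lemma CG_form: "j \<in> {1, 2} \<Longrightarrow> CG j = M2 (X (if j = 1 then vx1 else vx2)) (yi j) (yp j) (X (if j = 1 then vx1' else vx2'))"
  by (auto simp: CG_def C1G_def C2G_def yi_def yp_def)

lemma lc_snoc: "lc (xs @ [j]) = lc xs * CG j - CG j * lc xs"
  by (simp add: lc_def)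

lemma lc_form: "set xs \<subseteq> {1, 2} \<Longrightarrow> (lc xs :: 'k::field G mat2) = M2 (zz xs) (Aa xs) (Bb xs) (zz xs)"
proof (induction xs rule: rev_induct)
  case Nil
  show ?case by (simp add: lc_def base_comm zz_def Aa_def Bb_def P_def X_one)
next
  case (snoc j xs)
  then have j: "j \<in> {1, 2}" and IH: "(lc xs :: 'k G mat2) = M2 (zz xs) (Aa xs) (Bb xs) (zz xs)" by auto
  have yy: "(yi j :: 'k G) = Y (if j = 1 then 0 else 1)" "(yp j :: 'k G) = Y (if j = 1 then 2 else 3)"
    by (simp_all add: yi_def yp_def)
  have "(lc (xs @ [j]) :: 'k G mat2) = M2 (Aa xs * yp j + Bb xs * yi j)
      (X ((if j = 1 then vx1' else vx2') - (if j = 1 then vx1 else vx2)) * Aa xs)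
      (X ((if j = 1 then vx1 else vx2) - (if j = 1 then vx1' else vx2')) * Bb xs)
      (Aa xs * yp j + Bb xs * yi j)"
    unfolding lc_snoc IH CG_form[OF j] yy by (rule step_comm[OF Ev_zz Od_Aa Od_Bb])
  moreover have "(zz (xs @ [j]) :: 'k G) = Aa xs * yp j + Bb xs * yi j" by (simp add: zz_def)
  moreover have "(Aa (xs @ [j]) :: 'k G) = X ((if j = 1 then vx1' else vx2') - (if j = 1 then vx1 else vx2)) * Aa xs"
    using j by (auto simp: Aa_def P_def XX2 d1_def d2_def algebra_simps)
  moreover have "(Bb (xs @ [j]) :: 'k G) = X ((if j = 1 then vx1 else vx2) - (if j = 1 then vx1' else vx2')) * Bb xs"
    using j by (auto simp: Bb_def P_def XX2 d1_def d2_def algebra_simps)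
  ultimately show ?case by simp
qed


lemma length_12: "set (xs::nat list) \<subseteq> {1, 2} \<Longrightarrow> length xs = count_list xs 1 + count_list xs 2"
  by (induction xs) auto

lemma AaBb_eq:
  assumes "set xs \<subseteq> {1, 2}" "set ys \<subseteq> {1, 2}"
    "count_list xs 1 = count_list ys 1" "count_list xs 2 = count_list ys 2"
  shows "(Aa xs :: 'k::field G) = Aa ys" "(Bb xs :: 'k::field G) = Bb ys"
  using assms length_12[of xs] length_12[of ys] by (simp_all add: Aa_def Bb_def P_def)

lemma XC2: "w * (X p * t) = X p * (w * t)"
proof -
  have "w * (X p * t) = (w * X p) * t" by (simp add: mult.assoc)
  also have "w * X p = X p * w" by (rule X_comm[symmetric])
  finally show ?thesis by (simp add: mult.assoc)
qed

lemma core_alg: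
  "X (e * (Q * d2)) * a0 * Y 2 + X (Q * d2) * b0 * Y 0 - (X (e * (Q * d1)) * a0 * Y 3 + X (Q * d1) * b0 * Y 1)
   = X (e * Q) * (a0 * b0) + X Q * (a0 * b0 :: 'k::field G)"
proof -
  have L1: "a0 * b0 = X d2 * (a0 * Y 2) - X d1 * (a0 * (Y 3 :: 'k G))"
    unfolding b0_def by (simp add: algebra_simps XC2)
  have L2: "b0 * a0 = X d1 * (b0 * Y 1) - X d2 * (b0 * (Y 0 :: 'k G))"
    unfolding a0_def by (simp add: algebra_simps XC2)
  have an: "a0 * b0 = - (b0 * (a0 :: 'k G))" by (rule Lin_anti[OF Lin_a0 Lin_b0])
  have "X (e * Q) * (a0 * b0) + X Q * (a0 * b0 :: 'k::field G)
     = X (e * Q) * (X d2 * (a0 * Y 2) - X d1 * (a0 * Y 3)) - X Q * (X d1 * (b0 * Y 1) - X d2 * (b0 * Y 0))"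
    by (subst L1, subst an, subst L2, simp add: algebra_simps)
  also have "\<dots> = X (e * (Q * d2)) * a0 * Y 2 + X (Q * d2) * b0 * Y 0 - (X (e * (Q * d1)) * a0 * Y 3 + X (Q * d1) * b0 * Y 1)"
    by (simp add: algebra_simps XX2 mult_ac)
  finally show ?thesis by simp
qed

lemma KL_12:
  assumes "set xs \<subseteq> {1, 2}" "set ys \<subseteq> {1, 2}"
    "count_list (xs @ [1]) 1 = count_list (ys @ [2]) 1" "count_list (xs @ [1]) 2 = count_list (ys @ [2]) 2"
  shows "Kl (zz (xs @ [1]) - zz (ys @ [2]) :: 'k::field G)"
proof -
  define q1 where "q1 = count_list xs 1"
  define q2 where "q2 = count_list ys 2"
  have c: "count_list xs 2 = Suc q2" "count_list ys 1 = Suc q1" using assms(3,4) by (simp_all add: q1_def q2_def)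
  have L: "length xs = length ys" using length_12[OF assms(1)] length_12[OF assms(2)] c q1_def q2_def by simp
  define Q :: "'k kx" where "Q = d1 ^ q1 * d2 ^ q2"
  define e :: "'k kx" where "e = (-1) ^ length xs"
  have cc: "count_list xs 1 = q1" "count_list ys 2 = q2" by (simp_all add: q1_def q2_def)
  have Px: "P xs = Q * d2" unfolding P_def cc c Q_def by (simp add: mult_ac)
  have Py: "P ys = Q * d1" unfolding P_def cc c Q_def by (simp add: mult_ac)
  have "zz (xs @ [1]) - zz (ys @ [2]) =
     X (e * (Q * d2)) * a0 * Y 2 + X (Q * d2) * b0 * Y 0 - (X (e * (Q * d1)) * a0 * Y 3 + X (Q * d1) * b0 * (Y 1 :: 'k G))"
    by (simp add: zz_def Aa_def Bb_def Px Py e_def L yi_def yp_def)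
  also have "\<dots> = X (e * Q) * (a0 * b0) + X Q * (a0 * b0)" by (rule core_alg)
  finally show ?thesis using Kl_add Kl_X Kl_a0b0 by metis
qed

lemma KL:
  assumes "set xs \<subseteq> {1, 2}" "set ys \<subseteq> {1, 2}"
    "count_list xs 1 = count_list ys 1" "count_list xs 2 = count_list ys 2"
  shows "Kl (zz xs - zz ys :: 'k::field G)"
proof (cases "xs = []")
  case True
  then have "ys = []" using assms length_12[of xs] length_12[of ys] by auto
  then show ?thesis using True by (simp add: Kl_zero)
next
  case False
  then have "ys \<noteq> []" using assms length_12[of xs] length_12[of ys] by auto
  then obtain ys' j' where ys: "ys = ys' @ [j']" by (metis rev_exhaust)
  obtain xs' j where xs: "xs = xs' @ [j]" using False by (metis rev_exhaust)
  have j: "j \<in> {1, 2}" "j' \<in> {1, 2}" and s: "set xs' \<subseteq> {1, 2}" "set ys' \<subseteq> {1, 2}"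
    using assms xs ys by auto
  show ?thesis
  proof (cases "j = j'")
    case True
    then have "count_list xs' 1 = count_list ys' 1" "count_list xs' 2 = count_list ys' 2"
      using assms(3,4) xs ys by auto
    then have "(Aa xs' :: 'k G) = Aa ys'" "(Bb xs' :: 'k G) = Bb ys'" using AaBb_eq s by blast+
    then show ?thesis using xs ys True by (simp add: zz_def Kl_zero)
  next
    case False
    then have "(j = 1 \<and> j' = 2) \<or> (j = 2 \<and> j' = 1)" using j by auto
    then show ?thesis
    proof
      assume "j = 1 \<and> j' = 2"
      then show ?thesis using KL_12[OF s] assms(3,4) xs ys by simp
    next
      assume jj: "j = 2 \<and> j' = 1"
      have "Kl (zz (ys' @ [1]) - zz (xs' @ [2]) :: 'k G)"
        using KL_12[OF s(2) s(1)] assms(3,4) xs ys jj by simp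
      then have "Kl (- (zz (ys' @ [1]) - zz (xs' @ [2])) :: 'k G)" by (rule Kl_uminus)
      then show ?thesis using xs ys jj by simp
    qed
  qed
qed


inductive_set Rg :: "'k::field G set" where
  X: "X p \<in> Rg"
| Y: "Y i \<in> Rg"
| add: "a \<in> Rg \<Longrightarrow> b \<in> Rg \<Longrightarrow> a + b \<in> Rg"
| mul: "a \<in> Rg \<Longrightarrow> b \<in> Rg \<Longrightarrow> a * b \<in> Rg"

lemma Rg_0: "0 \<in> Rg" using Rg.X[of 0] by (simp add: X_zero)
lemma Rg_1: "1 \<in> Rg" using Rg.X[of 1] by (simp add: X_one)

lemma Ev_Rg: assumes w: "Ev w" and e: "e \<in> Rg" shows "w * e = e * w"
  using e
proof (induction e rule: Rg.induct)
  case (X p) then show ?case by (rule X_comm[symmetric])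
next
  case (Y i) then show ?case using w by (simp add: Ev_def)
next
  case (add a b) then show ?case by (simp add: algebra_simps)
next
  case (mul a b)
  have "w * (a * b) = (w * a) * b" by (simp add: mult.assoc)
  also have "\<dots> = a * (w * b)" using mul by (simp add: mult.assoc)
  also have "\<dots> = a * b * w" using mul by (simp add: mult.assoc)
  finally show ?case .
qed

fun ents :: "'a mat2 \<Rightarrow> 'a set" where "ents (M2 a b c d) = {a, b, c, d}"

lemma FF_ents: "M \<in> FF \<Longrightarrow> ents M \<subseteq> Rg"
proof (induction M rule: FF.induct)
  case one then show ?case by (simp add: one_mat2_def Rg_0 Rg_1)
next
  case gen1 then show ?case by (simp add: C1G_def Rg.X Rg.Y)
next
  case gen2 then show ?case by (simp add: C2G_def Rg.X Rg.Y)
next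
  case (add a b) then show ?case by (cases a rule: mat2.exhaust; cases b rule: mat2.exhaust) (auto intro: Rg.add)
next
  case (mul a b) then show ?case by (cases a rule: mat2.exhaust; cases b rule: mat2.exhaust) (auto intro!: Rg.add Rg.mul)
next
  case (smul a c) then show ?case by (cases a rule: mat2.exhaust) (auto simp: smat_def intro!: Rg.add Rg.mul Rg.X Rg_0)
qed

lemma smat_comm_ents: "(\<And>e. e \<in> ents M \<Longrightarrow> w * e = e * w) \<Longrightarrow> smat w * M = M * smat w"
  by (cases M) (simp add: smat_def)

lemma smat_FF_comm: "Ev w \<Longrightarrow> M \<in> FF \<Longrightarrow> smat w * M = M * smat w"
  by (rule smat_comm_ents) (use FF_ents Ev_Rg in blast)

lemma smat_X_comm: "smat (X c) * M = M * smat (X c)"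
  by (rule smat_comm_ents) (simp add: X_comm)

lemma smat_mult: "smat (x * y) = smat x * smat y" by (simp add: smat_def)
lemma smat_add: "smat (x + y) = smat x + smat y" by (simp add: smat_def)
lemma smat_zero: "smat 0 = 0" by (simp add: smat_def zero_mat2_def)

lemma W_base: "Kl D \<Longrightarrow> smat D * (C1G * C2G - C2G * C1G) = 0"
  by (simp add: base_comm smat_def Kl_def zero_mat2_def)

lemma W_gen:
  assumes K: "Kl (D :: 'k::field G)" and g: "g = C1G \<or> g = C2G" and c: "c \<in> FF"
  shows "smat D * (g * c - c * g) = 0"
  using c
proof (induction c rule: FF.induct)
  case one then show ?case by simp
next
  case gen1
  show ?case using g
  proof
    assume "g = C2G"
    then have "smat D * (g * C1G - C1G * g) = - (smat D * (C1G * C2G - C2G * C1G))" by (simp add: algebra_simps)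
    then show ?thesis using W_base[OF K] by simp
  qed simp
next
  case gen2
  show ?case using g
  proof
    assume "g = C1G"
    then show ?thesis using W_base[OF K] by simp
  qed simp
next
  case (add a b) then show ?case by (simp add: algebra_simps)
next
  case (mul a b)
  have Ev: "Ev D" using K by (simp add: Kl_def)
  have "g * (a * b) - a * b * g = (g * a - a * g) * b + a * (g * b - b * g)" by (simp add: algebra_simps)
  then have "smat D * (g * (a * b) - a * b * g) = smat D * (g * a - a * g) * b + (smat D * a) * (g * b - b * g)"
    by (simp add: algebra_simps)
  also have "\<dots> = 0" using mul smat_FF_comm[OF Ev mul(1)] by (simp add: mult.assoc)
  finally show ?case .
next
  case (smul a c)
  define S where "S = smat (X (constK c))"
  have gS: "g * S = S * g" unfolding S_def by (rule smat_X_comm[symmetric])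
  have dS: "smat D * S = S * smat D" unfolding S_def by (rule smat_X_comm[symmetric])
  have "g * (S * a) = S * (g * a)" by (simp add: mult.assoc[symmetric] gS)
  then have "g * (S * a) - S * a * g = S * (g * a - a * g)" by (simp add: algebra_simps)
  then have "smat D * (g * (S * a) - S * a * g) = S * (smat D * (g * a - a * g))"
    by (simp add: mult.assoc[symmetric] dS)
  then show ?case using smul by (simp add: S_def)
qed

lemma W_comm:
  assumes K: "Kl (D :: 'k::field G)" and b: "b \<in> FF"
  shows "\<forall>c\<in>FF. smat D * (b * c - c * b) = 0"
  using b
proof (induction b rule: FF.induct)
  case one then show ?case by simp
next
  case gen1 then show ?case using W_gen[OF K] by blast
next
  case gen2 then show ?case using W_gen[OF K] by blast
next
  case (add a b) then show ?case by (simp add: algebra_simps)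
next
  case (mul a b)
  have Ev: "Ev D" using K by (simp add: Kl_def)
  show ?case
  proof
    fix c :: "'k G mat2" assume c: "c \<in> FF"
    have "smat D * (a * b * c - c * (a * b)) = (smat D * a) * (b * c - c * b) + smat D * (a * c - c * a) * b"
      by (simp add: algebra_simps)
    also have "\<dots> = 0" using mul c smat_FF_comm[OF Ev mul(1)] by (simp add: mult.assoc)
    finally show "smat D * (a * b * c - c * (a * b)) = 0" .
  qed
next
  case (smul a k)
  define S where "S = smat (X (constK k))"
  have dS: "smat D * S = S * smat D" unfolding S_def by (rule smat_X_comm[symmetric])
  show ?case
  proof
    fix c :: "'k G mat2" assume c: "c \<in> FF"
    have cS: "c * S = S * c" unfolding S_def by (rule smat_X_comm[symmetric])
    have "c * (S * a) = S * (c * a)" by (simp add: mult.assoc[symmetric] cS)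
    then have "S * a * c - c * (S * a) = S * (a * c - c * a)" by (simp add: algebra_simps)
    then have "smat D * (S * a * c - c * (S * a)) = S * (smat D * (a * c - c * a))"
      by (simp add: mult.assoc[symmetric] dS)
    then show "smat D * (smat (X (constK k)) * a * c - c * (smat (X (constK k)) * a)) = 0"
      using smul c by (simp add: S_def)
  qed
qed

lemma strongly_smat:
  assumes K: "Kl (D :: 'k::field G)" and F: "smat D \<in> FF"
  shows "centralG (smat D) \<and> (\<forall>b\<in>FF. centralG (smat D * b))"
proof -
  have Ev: "Ev D" using K by (simp add: Kl_def)
  have C: "centralG (smat D)" using F smat_FF_comm[OF Ev] by (simp add: centralG_def)
  have "centralG (smat D * b)" if b: "b \<in> FF" for b
    unfolding centralG_def
  proof (intro conjI ballI)
    show "smat D * b \<in> FF" using F b by (rule FF.mul)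
    fix c :: "'k G mat2" assume c: "c \<in> FF"
    have "c * (smat D * b) = smat D * (c * b)"
      using smat_FF_comm[OF Ev c] by (simp add: mult.assoc[symmetric])
    moreover have "smat D * (b * c - c * b) = 0" using W_comm[OF K b] c by blast
    ultimately show "smat D * b * c = c * (smat D * b)" by (simp add: algebra_simps)
  qed
  then show ?thesis using C by blast
qed


lemma d1_nz: "d1 \<noteq> (0::'k::field kx)"
proof
  assume "d1 = (0::'k kx)"
  moreover have "coeff (d1::'k kx) 1 = 1" by (simp add: d1_def vx1_def vx1'_def coeff_monom)
  ultimately show False by simp
qed

lemma d2_nz: "d2 \<noteq> (0::'k::field kx)"
proof
  assume "d2 = (0::'k kx)"
  moreover have "coeff (coeff (d2::'k kx) 0) 1 = 1" by (simp add: d2_def vx2_def vx2'_def coeff_monom)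
  ultimately show False by simp
qed

lemma P_nz: "P xs \<noteq> (0::'k::field kx)"
  by (simp add: P_def d1_nz d2_nz)

lemma extract_a0: assumes "X c * a0 = (0::'k::field G)" shows "c = 0"
proof -
  have "X c * a0 = X (c * d1) * Y 1 - X (c * d2) * (Y 0 :: 'k G)"
    by (simp add: a0_def algebra_simps XX2)
  then have "rep (X c * a0) {1} = c * d1"
    by (simp add: minus_G.rep_eq gsub_def rep_XY)
  then have "c * d1 = 0" using assms by (simp add: zero_G.rep_eq gzero_def)
  moreover have "d1 \<noteq> (0::'k kx)" by (rule d1_nz)
  ultimately show ?thesis by simp
qed

lemma lc_diff:
  assumes "set xs \<subseteq> {1, 2}" "set ys \<subseteq> {1, 2}"
    "count_list xs 1 = count_list ys 1" "count_list xs 2 = count_list ys 2"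
  shows "(lc xs :: 'k::field G mat2) = lc ys + smat (zz xs - zz ys)"
proof -
  have "(lc xs :: 'k G mat2) = M2 (zz xs) (Aa xs) (Bb xs) (zz xs)" by (rule lc_form[OF assms(1)])
  moreover have "(lc ys :: 'k G mat2) = M2 (zz ys) (Aa ys) (Bb ys) (zz ys)" by (rule lc_form[OF assms(2)])
  moreover have "(Aa xs :: 'k G) = Aa ys" "(Bb xs :: 'k G) = Bb ys" using AaBb_eq[OF assms] by blast+
  ultimately show ?thesis by (simp add: smat_def)
qed

lemma decomp:
  assumes "\<forall>j<r. set (js j) \<subseteq> {1, 2} \<and> count_list (js j) 1 = c1 \<and> count_list (js j) 2 = c2"
  shows "\<exists>D. Kl D \<and> fc alpha js r = smat (X (\<Sum>j<r. alpha j)) * lc (js 0) + smat (D :: 'k::field G)"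
  using assms
proof (induction r)
  case 0
  show ?case by (rule exI[of _ 0]) (simp add: Kl_zero X_zero smat_zero)
next
  case (Suc r)
  then obtain D where K: "Kl D" and f: "fc alpha js r = smat (X (\<Sum>j<r. alpha j)) * lc (js 0) + smat (D :: 'k G)"
    by auto
  have h0: "set (js 0) \<subseteq> {1, 2}" "count_list (js 0) 1 = c1" "count_list (js 0) 2 = c2" using Suc.prems by auto
  have hr: "set (js r) \<subseteq> {1, 2}" "count_list (js r) 1 = c1" "count_list (js r) 2 = c2" using Suc.prems by auto
  define w :: "'k G" where "w = zz (js r) - zz (js 0)"
  have Kw: "Kl w" unfolding w_def by (rule KL) (use h0 hr in auto)
  have lr: "(lc (js r) :: 'k G mat2) = lc (js 0) + smat w" unfolding w_def by (rule lc_diff) (use h0 hr in auto)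
  have "fc alpha js (Suc r) = smat (X (\<Sum>j<Suc r. alpha j)) * lc (js 0) + smat (D + X (alpha r) * w)"
    by (simp add: f lr X_add smat_add smat_mult algebra_simps)
  moreover have "Kl (D + X (alpha r) * w)" by (intro Kl_add Kl_X K Kw)
  ultimately show ?case by blast
qed

theorem proposition3:
  fixes n m r :: nat and js :: "nat \<Rightarrow> nat list" and alpha :: "nat \<Rightarrow> 'k::field kx"
  assumes "infinite (UNIV :: 'k set)"
    and "(2::'k) \<noteq> 0"
    and "n \<ge> 1" and "m \<ge> 1"
    and "\<forall>j<r. set (js j) \<subseteq> {1, 2} \<and> 1 + count_list (js j) 1 = n
                \<and> 1 + count_list (js j) 2 = m"
    and "fcomb r alpha js \<in> Falg"
  shows "(strongly_central (fcomb r alpha js) \<longleftrightarrow> central_in_F (fcomb r alpha js))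
       \<and> (central_in_F (fcomb r alpha js) \<longleftrightarrow> (\<Sum>j<r. alpha j) = 0)"
proof -
  define f where "f = fc alpha js r"
  define \<beta> where "\<beta> = (\<Sum>j<r. alpha j)"
  have fe: "fcomb r alpha js = mapR f" unfolding f_def by (rule fcomb_eq)
  have H: "\<forall>j<r. set (js j) \<subseteq> {1, 2} \<and> count_list (js j) 1 = n - 1 \<and> count_list (js j) 2 = m - 1"
    using assms(5) by auto
  obtain D where K: "Kl D" and fD: "f = smat (X \<beta>) * lc (js 0) + smat D"
    using decomp[OF H, of alpha] unfolding f_def \<beta>_def by blast
  have fF: "f \<in> FF" using assms(6) fe Falg_iff by metis
  have EvD: "Ev D" using K by (simp add: Kl_def)
  have A: "strongly_central (fcomb r alpha js)" if b0: "\<beta> = 0"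
  proof -
    have "f = smat D" using fD b0 by (simp add: X_zero smat_zero)
    then show ?thesis unfolding fe strongly_iff using strongly_smat[OF K] fF by simp
  qed
  have B: "\<beta> = 0" if c: "central_in_F (fcomb r alpha js)"
  proof (cases "r = 0")
    case True then show ?thesis by (simp add: \<beta>_def)
  next
    case False
    then have h0: "set (js 0) \<subseteq> {1, 2}" using H by auto
    define u0 :: "'k G mat2" where "u0 = lc (js 0)"
    have cf: "centralG f" using c fe central_iff by metis
    moreover have "C1G \<in> (FF :: 'k G mat2 set)" by (rule FF.gen1)
    ultimately have "f * C1G = C1G * f" by (simp add: centralG_def)
    note fc1 = this
    have DS: "smat D * C1G = C1G * smat D" by (rule smat_FF_comm[OF EvD FF.gen1])
    have XS: "C1G * smat (X \<beta>) = smat (X \<beta>) * C1G" by (rule smat_X_comm[symmetric])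
    have e1: "f * C1G = smat (X \<beta>) * (u0 * C1G) + smat D * C1G"
      unfolding fD u0_def by (simp add: algebra_simps)
    have e3: "C1G * (smat (X \<beta>) * u0) = smat (X \<beta>) * (C1G * u0)"
      by (simp add: mult.assoc[symmetric] XS)
    have e2: "C1G * f = smat (X \<beta>) * (C1G * u0) + smat D * C1G"
      unfolding fD u0_def[symmetric] by (simp add: distrib_left e3 DS)
    have "smat (X \<beta>) * (u0 * C1G) = smat (X \<beta>) * (C1G * u0)"
      using fc1 e1 e2 by simp
    then have eq0: "smat (X \<beta>) * (u0 * C1G - C1G * u0) = 0" by (simp add: algebra_simps)
    have "u0 * C1G - C1G * u0 = lc (js 0 @ [1])" unfolding u0_def lc_snoc by (simp add: CG_def)
    also have "\<dots> = M2 (zz (js 0 @ [1])) (Aa (js 0 @ [1])) (Bb (js 0 @ [1])) (zz (js 0 @ [1]))"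
      by (rule lc_form) (use h0 in auto)
    finally have "X \<beta> * Aa (js 0 @ [1]) = (0 :: 'k G)" using eq0
      by (simp add: smat_def zero_mat2_def)
    then have "X (\<beta> * ((-1) ^ length (js 0 @ [1]) * P (js 0 @ [1]))) * a0 = (0 :: 'k G)"
      by (simp add: Aa_def XX2)
    then have "\<beta> * ((-1) ^ length (js 0 @ [1]) * P (js 0 @ [1])) = 0" by (rule extract_a0)
    moreover have "P (js 0 @ [1]) \<noteq> (0::'k kx)" by (rule P_nz)
    ultimately show ?thesis by simp
  qed
  have S: "strongly_central (fcomb r alpha js) \<Longrightarrow> central_in_F (fcomb r alpha js)"
    by (simp add: strongly_central_def)
  show ?thesis using A B S unfolding \<beta>_def by blast
qed


end
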